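(* Let $K=K(p,q)$ be a 2-bridge knot with $e_i,\sigma,C,D,W,W_*$ as in the context, let $n\in\mathbb{Z}$ and $N=n-2\sigma$. If $t\in\mathbb{C}\setminus\{0\}$ and $u=(t-t^{-1})^2$, then the equations $C^NW_*W=\mathrm{Id}$ and $WC=DW$ do not both hold.
   Context: $K(p,q)$ denotes the 2-bridge knot with $p,q$ odd integers, $q\in(-p,p)$. For $1\le i\le p-1$ let $e_i=(-1)^{\lfloor iq/p\rfloor}$ and $\sigma=\sum_{i=1}^{p-1}e_i$. For $t\in\mathbb{C}\setminus\{0\}$, $u\in\mathbb{C}$ let $C=\begin{pmatrix}t&1\\0&t^{-1}\end{pmatrix}$, $D=\begin{pmatrix}t&0\\-u&t^{-1}\end{pmatrix}$, $W=C^{e_1}D^{e_2}\cdots C^{e_{p-2}}D^{e_{p-1}}$ and $W_*=D^{e_1}C^{e_2}\cdots D^{e_{p-2}}C^{e_{p-1}}$. *)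

theory Defs
  imports "HOL-Analysis.Analysis"
begin

type_synonym cmat2 = "complex^2^2"

definition mat_zpow :: "cmat2 \<Rightarrow> int \<Rightarrow> cmat2" where
  "mat_zpow A N = (if 0 \<le> N then ((\<lambda>X. A ** X) ^^ nat N) (mat 1)
                   else ((\<lambda>X. matrix_inv A ** X) ^^ nat (- N)) (mat 1))"

definition Cmat :: "complex \<Rightarrow> cmat2" where
  "Cmat t = vector [vector [t, 1], vector [0, inverse t]]"

definition Dmat :: "complex \<Rightarrow> complex \<Rightarrow> cmat2" where
  "Dmat t u = vector [vector [t, 0], vector [- u, inverse t]]"

text \<open>e_i = (-1)^floor(i q / p); for p > 0 integer division is the floor.\<close>
definition eps :: "int \<Rightarrow> int \<Rightarrow> nat \<Rightarrow> int" where
  "eps p q i = (if even ((int i * q) div p) then 1 else -1)"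

definition sigma :: "int \<Rightarrow> int \<Rightarrow> int" where
  "sigma p q = (\<Sum>i\<in>{1..nat p - 1}. eps p q i)"

definition mat_prod_list :: "cmat2 list \<Rightarrow> cmat2" where
  "mat_prod_list Ms = foldr (\<lambda>A B. A ** B) Ms (mat 1)"

definition Wmat :: "int \<Rightarrow> int \<Rightarrow> complex \<Rightarrow> complex \<Rightarrow> cmat2" where
  "Wmat p q t u = mat_prod_list
     (map (\<lambda>i. mat_zpow (if odd i then Cmat t else Dmat t u) (eps p q i)) [1..<nat p])"

definition Wstar :: "int \<Rightarrow> int \<Rightarrow> complex \<Rightarrow> complex \<Rightarrow> cmat2" where
  "Wstar p q t u = mat_prod_list
     (map (\<lambda>i. mat_zpow (if odd i then Dmat t u else Cmat t) (eps p q i)) [1..<nat p])"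

end

theory Submission
  imports Defs
begin

lemma minv_left:
  assumes "invertible (M::cmat2)"
  shows "matrix_inv M ** M = mat 1"
  using assms unfolding invertible_def matrix_inv_def
  by (rule someI2_ex) auto

lemma eig_inv:
  assumes "invertible (M::cmat2)" "M *v v = c *s v" "c \<noteq> 0"
  shows "matrix_inv M *v v = inverse c *s v"
proof -
  have "v = matrix_inv M *v (M *v v)"
    by (simp add: matrix_vector_mul_assoc minv_left[OF assms(1)])
  also have "\<dots> = c *s (matrix_inv M *v v)"
    using assms(2) by (simp add: vector_scalar_commute)
  finally have "inverse c *s v = matrix_inv M *v v"
    using assms(3) by (metis vector_smult_assoc left_inverse vector_smult_lid)
  then show ?thesis by simp
qed

lemma det_inv: "det (M::cmat2) \<noteq> 0 \<Longrightarrow> invertible M"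
  using invertible_det_nz by blast

lemma zpow_eig:
  assumes "det (M::cmat2) \<noteq> 0" "M *v v = c *s v" "c \<noteq> 0" "e = 1 \<or> e = -1"
  shows "\<exists>d. d \<noteq> 0 \<and> mat_zpow M e *v v = d *s v"
  using assms(4)
proof
  assume "e = 1"
  then show ?thesis using assms by (auto simp: mat_zpow_def)
next
  assume "e = -1"
  then show ?thesis using assms eig_inv[OF det_inv[OF assms(1)] assms(2,3)]
    by (intro exI[of _ "inverse c"]) (auto simp: mat_zpow_def)
qed

lemma prod_eig:
  assumes "\<forall>M\<in>set Ms. \<exists>d. d \<noteq> 0 \<and> M *v v = d *s v"
  shows "\<exists>d. d \<noteq> 0 \<and> mat_prod_list Ms *v v = d *s v"
  using assms
proof (induction Ms)
  case Nil
  then show ?case by (auto simp: mat_prod_list_def intro: exI[of _ 1])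
next
  case (Cons M Ms)
  then obtain d where d: "d \<noteq> 0" "mat_prod_list Ms *v v = d *s v" by auto
  from Cons.prems obtain c where c: "c \<noteq> 0" "M *v v = c *s v" by auto
  have "mat_prod_list (M # Ms) *v v = M *v (mat_prod_list Ms *v v)"
    by (simp add: mat_prod_list_def matrix_vector_mul_assoc)
  also have "\<dots> = (d * c) *s v"
    using c d by (simp add: vector_scalar_commute)
  finally show ?case using c d by (intro exI[of _ "d * c"]) auto
qed

lemma eps_pm: "eps p q i = 1 \<or> eps p q i = -1"
  by (simp add: eps_def)

theorem mainTheorem6:
  fixes p q n :: int and t u :: complex
  assumes "odd p" and "odd q" and "- p < q" and "q < p" and "coprime p q"
    and "t \<noteq> 0" and "u = (t - inverse t)\<^sup>2"
  shows "\<not> (mat_zpow (Cmat t) (n - 2 * sigma p q) ** Wstar p q t u ** Wmat p q t u = mat 1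
            \<and> Wmat p q t u ** Cmat t = Dmat t u ** Wmat p q t u)"
proof -
  define v :: "complex^2" where "v = vector [1, inverse t - t]"
  have Cv: "Cmat t *v v = inverse t *s v"
    by (simp add: v_def Cmat_def vec_eq_iff forall_2 matrix_vector_mult_def sum_2)
  have Dv: "Dmat t u *v v = t *s v"
    using assms(6,7) by (simp add: v_def Dmat_def vec_eq_iff forall_2 matrix_vector_mult_def sum_2
      field_simps power2_eq_square)
  have dC: "det (Cmat t) \<noteq> 0" using assms(6) by (simp add: det_2 Cmat_def)
  have dD: "det (Dmat t u) \<noteq> 0" using assms(6) by (simp add: det_2 Dmat_def)
  have fac: "\<exists>d. d \<noteq> 0 \<and> mat_zpow (if odd i then Cmat t else Dmat t u) (eps p q i) *v v = d *s v" for i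
  proof (cases "odd i")
    case True
    then show ?thesis using zpow_eig[OF dC Cv _ eps_pm] assms(6) by simp
  next
    case False
    then show ?thesis using zpow_eig[OF dD Dv _ eps_pm] assms(6) by simp
  qed
  have "\<exists>d. d \<noteq> 0 \<and> Wmat p q t u *v v = d *s v"
    unfolding Wmat_def by (rule prod_eig) (simp only: set_map ball_simps image_iff, metis fac)
  then obtain d where d: "d \<noteq> 0" "Wmat p q t u *v v = d *s v" by auto
  define W where "W = Wmat p q t u"
  have "(W *v v) $ 1 = d" using d by (simp add: W_def v_def)
  then have e1: "W$1$1 + W$1$2 * (inverse t - t) = d"
    by (simp add: v_def matrix_vector_mult_def sum_2)
  show ?thesis
  proof
    assume "mat_zpow (Cmat t) (n - 2 * sigma p q) ** Wstar p q t u ** Wmat p q t u = mat 1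
            \<and> Wmat p q t u ** Cmat t = Dmat t u ** Wmat p q t u"
    then have "(W ** Cmat t) $ 1 $ 2 = (Dmat t u ** W) $ 1 $ 2" by (simp add: W_def)
    then have "W$1$1 + W$1$2 * inverse t = t * W$1$2"
      by (simp add: matrix_matrix_mult_def sum_2 Cmat_def Dmat_def)
    with e1 d(1) show False by (simp add: algebra_simps)
  qed
qed

end
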